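(* Let $\omega_n>0$, $0\le\zeta<1$, $\omega_0=\omega_n\sqrt{1-\zeta^2}$, $T>0$, $s_0\in\mathbb{R}$, and let $N_\tau=\exp\!\left(\tau\begin{pmatrix}0&1\\-\omega_n^2&-2\zeta\omega_n\end{pmatrix}\right)$. Put $N_1=N_{s_0}$, $N_2=N_{T-s_0}$, and for $\alpha\in\mathbb{R}$ let $$J=N_2\begin{pmatrix}1&0\\ \alpha&1\end{pmatrix}N_1.$$ Then $$\operatorname{Tr}(J)=\operatorname{Tr}(N_2N_1)+\alpha\, e^{-\zeta\omega_n T}\,\frac{\sin(\omega_0 T)}{\omega_0},\qquad \det J=\det N_2\det N_1=e^{-2\zeta\omega_n T}.$$ Consequently, if $T=2\pi/\omega_f$ and $\omega_0\neq m\omega_f/2$ for all integers $m$, then the coefficient of $\alpha$ in $\operatorname{Tr}(J)$ is nonzero; in particular, when $\alpha=\dfrac{w_2h_1\sqrt{2a^*}}{2\sqrt{-H_{\min}}}$ with $w_2h_1\neq 0$, $a^*>0$, the trace of $J$ diverges like $(-H_{\min})^{-1/2}$ as $H_{\min}\to 0^-$, while the determinant stays constant.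
   Context: Setting: a forced impact oscillator $\ddot u+2\zeta\omega_n\dot u+\omega_n^2 u=g(t)$ for $u<\sigma$, with $g$ of period $T$ (angular frequency $\omega_f$), hard wall at $u=\sigma$ with $H(u,v)=\sigma-u$, $h_1=\partial H/\partial u$, reset map $\mathbf x\mapsto\mathbf x+W\,v(\mathbf x)$ with $W=(0\;\;w_2)^T$, $a^*>0$ the normal acceleration at the grazing point, and $H_{\min}<0$ the minimum of $H$ along the unconstrained trajectory near a grazing periodic orbit. The orbit takes time $s_0$ from the stroboscopic Poincaré section to the wall and $T-s_0$ back; $J$ is the Jacobian of the stroboscopic map near grazing, with $\begin{pmatrix}1&0\\ \alpha&1\end{pmatrix}$ the Jacobian of the zero-time discontinuity mapping. *)

theory Defs
  imports "HOL-Analysis.Analysis"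
begin

fun matpow :: "real^'n^'n \<Rightarrow> nat \<Rightarrow> real^'n^'n" where
  "matpow A 0 = mat 1"
| "matpow A (Suc k) = A ** matpow A k"

definition mexp :: "real^'n^'n \<Rightarrow> real^'n^'n" where
  "mexp A = (\<Sum>k. (1 / fact k) *\<^sub>R matpow A k)"

definition mat2 :: "real \<Rightarrow> real \<Rightarrow> real \<Rightarrow> real \<Rightarrow> real^2^2" where
  "mat2 a b c d = vector [vector [a, b], vector [c, d]]"

definition Nflow :: "real \<Rightarrow> real \<Rightarrow> real \<Rightarrow> real^2^2" where
  "Nflow wn zeta tau = mexp (tau *\<^sub>R mat2 0 1 (- wn\<^sup>2) (- 2 * zeta * wn))"

definition Jmat :: "real \<Rightarrow> real \<Rightarrow> real \<Rightarrow> real \<Rightarrow> real \<Rightarrow> real^2^2" where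
  "Jmat wn zeta T s0 alpha = Nflow wn zeta (T - s0) ** mat2 1 0 alpha 1 ** Nflow wn zeta s0"

end

theory Submission imports Defs begin

lemma mat2_nth[simp]:
  "mat2 a b c d $ 1 $ 1 = a" "mat2 a b c d $ 1 $ 2 = b"
  "mat2 a b c d $ 2 $ 1 = c" "mat2 a b c d $ 2 $ 2 = d"
  by (simp_all add: mat2_def)

lemma mat2_eqI: "(M::real^2^2) = mat2 (M$1$1) (M$1$2) (M$2$1) (M$2$2)"
  by (simp add: vec_eq_iff forall_2)

lemma mat2_mult: "mat2 a b c d ** mat2 e f g h = mat2 (a*e+b*g) (a*f+b*h) (c*e+d*g) (c*f+d*h)"
  by (simp add: vec_eq_iff forall_2 matrix_matrix_mult_def sum_2)

lemma mat2_add: "mat2 a b c d + mat2 e f g h = mat2 (a+e) (b+f) (c+g) (d+h)"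
  by (simp add: vec_eq_iff forall_2)

lemma mat2_scaleR: "r *\<^sub>R mat2 a b c d = mat2 (r*a) (r*b) (r*c) (r*d)"
  by (simp add: vec_eq_iff forall_2)

lemma mat1_2: "(mat 1 :: real^2^2) = mat2 1 0 0 1"
  by (simp add: vec_eq_iff forall_2 mat_def)

lemma trace_mat2: "trace (mat2 a b c d) = a + d"
  by (simp add: trace_def sum_2)

lemma det_mat2: "det (mat2 a b c d) = a*d - b*c"
  by (simp add: det_2)

lemma mat2_cong: "a = a' \<Longrightarrow> b = b' \<Longrightarrow> c = c' \<Longrightarrow> d = d' \<Longrightarrow> mat2 a b c d = mat2 a' b' c' d'"
  by simp

definition phi :: "real \<Rightarrow> real \<Rightarrow> complex \<Rightarrow> real^2^2" where
  "phi a w0 z = Re z *\<^sub>R mat2 1 0 0 1 + Im z *\<^sub>R mat2 (a/w0) (1/w0) (-(w0^2+a^2)/w0) (-a/w0)"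

lemma phi_eq: "phi a w0 z = mat2 (Re z + Im z * a / w0) (Im z / w0) (- Im z * (w0^2+a^2) / w0) (Re z - Im z * a / w0)"
  by (simp add: phi_def mat2_scaleR mat2_add algebra_simps)

lemma phi_bl: "bounded_linear (phi a w0)"
  unfolding phi_def
  by (intro bounded_linear_add bounded_linear_compose[OF bounded_linear_scaleR_left] bounded_linear_Re bounded_linear_Im)

lemma phi_mult: assumes "w0 \<noteq> 0" shows "phi a w0 z ** phi a w0 w = phi a w0 (z * w)"
proof -
  have e: "Re (z*w) = Re z * Re w - Im z * Im w" "Im (z*w) = Re z * Im w + Im z * Re w" by simp_all
  show ?thesis
  unfolding phi_eq mat2_mult e
  apply (intro mat2_cong)
  using assms by (simp_all add: field_simps power2_eq_square)
qed

lemma phi_1: "phi a w0 1 = mat 1"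
  by (simp add: phi_eq mat1_2)

lemma matpow_phi: assumes "w0 \<noteq> 0"
  shows "matpow (phi a w0 z) k = phi a w0 (z ^ k)"
  by (induction k) (simp_all add: phi_1 phi_mult[OF assms])

lemma mexp_phi: assumes "w0 \<noteq> 0"
  shows "mexp (phi a w0 z) = phi a w0 (exp z)"
proof -
  have "(\<lambda>n. phi a w0 (z^n /\<^sub>R fact n)) sums phi a w0 (exp z)"
    by (rule bounded_linear.sums[OF phi_bl exp_converges])
  moreover have "(\<lambda>n. phi a w0 (z^n /\<^sub>R fact n)) = (\<lambda>k. (1 / fact k) *\<^sub>R matpow (phi a w0 z) k)"
    using linear_scale[OF bounded_linear.linear[OF phi_bl]]
    by (auto simp: matpow_phi[OF assms] divide_inverse_commute)
  ultimately show ?thesis unfolding mexp_def by (metis sums_unique)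
qed


lemma trace_J: assumes "w0 \<noteq> 0"
  shows "trace (phi a w0 z1 ** mat2 1 0 al 1 ** phi a w0 z2) = trace (phi a w0 z1 ** phi a w0 z2) + al * Im (z2 * z1) / w0"
  using assms unfolding phi_eq mat2_mult trace_mat2 by (simp add: field_simps)

lemma det_phi: assumes "w0 \<noteq> 0" shows "det (phi a w0 z) = Re z ^ 2 + Im z ^ 2"
  using assms unfolding phi_eq det_mat2 by (simp add: field_simps power2_eq_square)

theorem mainTheorem3:
  fixes wn zeta w0 T s0 :: real
  assumes wn_pos: "wn > 0" and zeta_ge: "0 \<le> zeta" and zeta_lt: "zeta < 1"
    and w0_def: "w0 = wn * sqrt (1 - zeta\<^sup>2)"
    and T_pos: "T > 0"
  shows
    "(\<forall>alpha::real.
        trace (Jmat wn zeta T s0 alpha)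
          = trace (Nflow wn zeta (T - s0) ** Nflow wn zeta s0)
            + alpha * exp (- zeta * wn * T) * sin (w0 * T) / w0
      \<and> det (Jmat wn zeta T s0 alpha) = det (Nflow wn zeta (T - s0)) * det (Nflow wn zeta s0)
      \<and> det (Nflow wn zeta (T - s0)) * det (Nflow wn zeta s0) = exp (- 2 * zeta * wn * T))
   \<and> (\<forall>wf::real. T = 2 * pi / wf \<longrightarrow> (\<forall>m::int. w0 \<noteq> real_of_int m * wf / 2) \<longrightarrow>
        exp (- zeta * wn * T) * sin (w0 * T) / w0 \<noteq> 0
        \<and> (\<forall>w2 h1 astar :: real. w2 * h1 \<noteq> 0 \<longrightarrow> astar > 0 \<longrightarrow>
             (let alpha = (\<lambda>Hmin::real. w2 * h1 * sqrt (2 * astar) / (2 * sqrt (- Hmin)));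
                  C = exp (- zeta * wn * T) * sin (w0 * T) / w0 * w2 * h1 * sqrt (2 * astar) / 2
              in C \<noteq> 0
                 \<and> ((\<lambda>Hmin. trace (Jmat wn zeta T s0 (alpha Hmin)) * sqrt (- Hmin)) \<longlongrightarrow> C) (at_left 0)
                 \<and> (\<forall>Hmin<0. det (Jmat wn zeta T s0 (alpha Hmin)) = exp (- 2 * zeta * wn * T)))))"
proof -
  define a where "a = zeta * wn"
  define lam where "lam = Complex (-a) w0"
  define E where "E = (\<lambda>t::real. exp (complex_of_real t * lam))"
  have "zeta * zeta \<le> zeta" using zeta_ge zeta_lt by (simp add: mult_left_le)
  hence zz: "1 - zeta\<^sup>2 > 0" using zeta_lt by (simp add: power2_eq_square)
  have w0pos: "w0 > 0" using w0_def wn_pos zz by simp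
  hence w0nz: "w0 \<noteq> 0" by simp
  have "w0\<^sup>2 = wn\<^sup>2 * (1 - zeta\<^sup>2)" using w0_def zz by (simp add: power_mult_distrib)
  hence wnsq: "wn\<^sup>2 = w0\<^sup>2 + a\<^sup>2" unfolding a_def by (simp add: algebra_simps power_mult_distrib)
  have N: "Nflow wn zeta t = phi a w0 (E t)" for t
  proof -
    have "t *\<^sub>R mat2 0 1 (- wn\<^sup>2) (- 2 * zeta * wn) = phi a w0 (complex_of_real t * lam)"
      unfolding phi_eq mat2_scaleR lam_def using w0nz
      by (intro mat2_cong) (simp_all add: wnsq a_def, simp add: algebra_simps)
    thus ?thesis unfolding Nflow_def E_def by (simp add: mexp_phi[OF w0nz])
  qed
  have ReE: "Re (E t) = exp (-a*t) * cos (w0*t)" for t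
    by (simp add: E_def lam_def Re_exp mult.commute)
  have ImE: "Im (E t) = exp (-a*t) * sin (w0*t)" for t
    by (simp add: E_def lam_def Im_exp mult.commute)
  have Eadd: "E s0 * E (T - s0) = E T"
    by (simp add: E_def flip: exp_add) (simp add: algebra_simps flip: distrib_right)
  have expsq: "exp (x::real) ^ 2 = exp (2*x)" for x
    using exp_of_nat_mult[of 2 x] by simp
  have detN: "det (Nflow wn zeta t) = exp (-2*a*t)" for t
  proof -
    have "det (Nflow wn zeta t) = exp (-a*t) ^ 2 * ((cos (w0*t))\<^sup>2 + (sin (w0*t))\<^sup>2)"
      unfolding N det_phi[OF w0nz] ReE ImE power_mult_distrib distrib_left ..
    also have "\<dots> = exp (-2*a*t)" by (simp add: expsq)
    finally show ?thesis .
  qed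
  have detI: "det (mat2 1 0 al 1) = 1" for al by (simp add: det_mat2)
  have P1: "trace (Jmat wn zeta T s0 alpha)
          = trace (Nflow wn zeta (T - s0) ** Nflow wn zeta s0)
            + alpha * exp (- zeta * wn * T) * sin (w0 * T) / w0
      \<and> det (Jmat wn zeta T s0 alpha) = det (Nflow wn zeta (T - s0)) * det (Nflow wn zeta s0)
      \<and> det (Nflow wn zeta (T - s0)) * det (Nflow wn zeta s0) = exp (- 2 * zeta * wn * T)" for alpha
  proof (intro conjI)
    show "trace (Jmat wn zeta T s0 alpha)
          = trace (Nflow wn zeta (T - s0) ** Nflow wn zeta s0)
            + alpha * exp (- zeta * wn * T) * sin (w0 * T) / w0"
      unfolding Jmat_def N trace_J[OF w0nz] Eadd ImE a_def by simp
    show "det (Jmat wn zeta T s0 alpha) = det (Nflow wn zeta (T - s0)) * det (Nflow wn zeta s0)"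
      unfolding Jmat_def det_mul detI by simp
    show "det (Nflow wn zeta (T - s0)) * det (Nflow wn zeta s0) = exp (- 2 * zeta * wn * T)"
      unfolding detN a_def by (simp flip: exp_add add: algebra_simps)
  qed
  show ?thesis
  proof (intro conjI allI impI)
    fix alpha show "trace (Jmat wn zeta T s0 alpha)
          = trace (Nflow wn zeta (T - s0) ** Nflow wn zeta s0)
            + alpha * exp (- zeta * wn * T) * sin (w0 * T) / w0"
      "det (Jmat wn zeta T s0 alpha) = det (Nflow wn zeta (T - s0)) * det (Nflow wn zeta s0)"
      "det (Nflow wn zeta (T - s0)) * det (Nflow wn zeta s0) = exp (- 2 * zeta * wn * T)"
      using P1 by blast+
  next
    fix wf :: real
    assume Tw: "T = 2 * pi / wf" and nm: "\<forall>m::int. w0 \<noteq> real_of_int m * wf / 2"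
    have wfnz: "wf \<noteq> 0" using Tw T_pos by auto
    have "sin (w0 * T) \<noteq> 0"
    proof
      assume "sin (w0 * T) = 0"
      then obtain i :: int where "w0 * T = of_int i * pi" by (auto simp: sin_zero_iff_int2)
      hence "w0 * (2 * pi / wf) = of_int i * pi" using Tw by simp
      hence "w0 = of_int i * wf / 2" using wfnz by (simp add: field_simps)
      thus False using nm by blast
    qed
    hence cnz: "exp (- zeta * wn * T) * sin (w0 * T) / w0 \<noteq> 0" using w0nz by simp
    thus "exp (- zeta * wn * T) * sin (w0 * T) / w0 \<noteq> 0" .
    fix w2 h1 astar :: real
    assume wh: "w2 * h1 \<noteq> 0" and ast: "astar > 0"
    define c where "c = exp (- zeta * wn * T) * sin (w0 * T) / w0"
    define t0 where "t0 = trace (Nflow wn zeta (T - s0) ** Nflow wn zeta s0)"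
    define alpha where "alpha = (\<lambda>Hmin::real. w2 * h1 * sqrt (2 * astar) / (2 * sqrt (- Hmin)))"
    define C where "C = exp (- zeta * wn * T) * sin (w0 * T) / w0 * w2 * h1 * sqrt (2 * astar) / 2"
    have Cnz: "C \<noteq> 0" using cnz wh ast by (simp add: C_def)
    have ev: "eventually (\<lambda>H. t0 * sqrt (- H) + C = trace (Jmat wn zeta T s0 (alpha H)) * sqrt (- H)) (at_left (0::real))"
    proof -
      have "eventually (\<lambda>H::real. H < 0) (at_left 0)" by (simp add: eventually_at_filter)
      thus ?thesis
      proof (rule eventually_mono)
        fix H :: real assume H: "H < 0"
        hence sp: "sqrt (- H) > 0" by simp
        show "t0 * sqrt (- H) + C = trace (Jmat wn zeta T s0 (alpha H)) * sqrt (- H)"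
          unfolding P1[THEN conjunct1] t0_def[symmetric] C_def alpha_def using sp
          by (simp add: field_simps)
      qed
    qed
    have "((\<lambda>H. t0 * sqrt (- H) + C) \<longlongrightarrow> t0 * sqrt (- 0) + C) (at_left (0::real))"
      by (intro tendsto_intros)
    hence lim: "((\<lambda>H. trace (Jmat wn zeta T s0 (alpha H)) * sqrt (- H)) \<longlongrightarrow> C) (at_left 0)"
      using tendsto_cong[OF ev] by simp
    have dets: "\<forall>Hmin<0. det (Jmat wn zeta T s0 (alpha Hmin)) = exp (- 2 * zeta * wn * T)"
      using P1 by simp
    show "let alpha = (\<lambda>Hmin::real. w2 * h1 * sqrt (2 * astar) / (2 * sqrt (- Hmin)));
                  C = exp (- zeta * wn * T) * sin (w0 * T) / w0 * w2 * h1 * sqrt (2 * astar) / 2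
              in C \<noteq> 0
                 \<and> ((\<lambda>Hmin. trace (Jmat wn zeta T s0 (alpha Hmin)) * sqrt (- Hmin)) \<longlongrightarrow> C) (at_left 0)
                 \<and> (\<forall>Hmin<0. det (Jmat wn zeta T s0 (alpha Hmin)) = exp (- 2 * zeta * wn * T))"
      unfolding Let_def alpha_def[symmetric] C_def[symmetric] using Cnz lim dets by blast
  qed
qed

end
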